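(* Let $n\ge 5$ be even and let $x,y$ be adjacent vertices of $Q_n$ with $f_n(x)+f_n(y)=\operatorname{str}_{f_n}(Q_n)$. If $x$ and $y$ both begin with $10$, then $$\operatorname{str}_{f_n}(Q_n)\le \operatorname{str}_{f_{n-2}}(Q_{n-2})+3\cdot 2^{n-2}+\binom{n-3}{\lceil (n-3)/2\rceil}+\binom{n-2}{\lceil (n-2)/2\rceil}.$$
   Context: $Q_n$ is the $n$-dimensional hypercube: vertices are the $n$-bit strings, adjacent iff they differ in exactly one position. For a bijection $f:V(G)\to\{1,\dots,|V(G)|\}$, $\operatorname{str}_f(G)=\max\{f(u)+f(v):uv\in E(G)\}$. An $n$-bit string is $x_1\cdots x_n$, $x_i\in\{0,1\}$; its weight is its number of $1$s. Lexicographic order: $x<y$ if for some $k$, $x_j=y_j$ for $j<k$ and $x_k<y_k$. $S_n^i$ is the sequence of $n$-bit strings of weight $i$ in increasing lexicographic order; $R_n^i$ is the same set in decreasing lexicographic order. $S_n$ is the concatenation $(R_n^1,R_n^3,\dots,R_n^{n-1},S_n^n,S_n^{n-2},\dots,S_n^2,S_n^0)$ for even $n$ and $(R_n^1,R_n^3,\dots,R_n^{n-2},R_n^n,S_n^{n-1},\dots,S_n^2,S_n^0)$ for odd $n$; $f_n$ maps the string in position $j$ of $S_n$ to $j$. *)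

theory Defs
  imports Complex_Main
begin

(* n-bit strings are lists of booleans of length n; True = 1, False = 0 *)

definition bitstrings :: "nat \<Rightarrow> bool list set" where
  "bitstrings n = {x. length x = n}"

definition weight :: "bool list \<Rightarrow> nat" where
  "weight x = length (filter id x)"

definition Q_adj :: "nat \<Rightarrow> bool list \<Rightarrow> bool list \<Rightarrow> bool" where
  "Q_adj n x y \<longleftrightarrow> length x = n \<and> length y = n \<and> card {i. i < n \<and> x ! i \<noteq> y ! i} = 1"

definition lex_less :: "bool list \<Rightarrow> bool list \<Rightarrow> bool" where
  "lex_less x y \<longleftrightarrow> length x = length y \<and>
     (\<exists>k < length x. (\<forall>j < k. x ! j = y ! j) \<and> \<not> x ! k \<and> y ! k)"

definition S_seq :: "nat \<Rightarrow> nat \<Rightarrow> bool list list" where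
  "S_seq n i = (THE xs. sorted_wrt lex_less xs \<and> set xs = {x \<in> bitstrings n. weight x = i})"

definition R_seq :: "nat \<Rightarrow> nat \<Rightarrow> bool list list" where
  "R_seq n i = rev (S_seq n i)"

definition Sn :: "nat \<Rightarrow> bool list list" where
  "Sn n = (if even n then
      concat (map (\<lambda>j. R_seq n (2*j+1)) [0..<n div 2]) @
      concat (map (\<lambda>j. S_seq n (n - 2*j)) [0..<n div 2 + 1])
    else
      concat (map (\<lambda>j. R_seq n (2*j+1)) [0..<(n+1) div 2]) @
      concat (map (\<lambda>j. S_seq n (n - 1 - 2*j)) [0..<(n+1) div 2]))"

(* f_n : string in position j (1-based) of S_n is mapped to j *)
definition f_lab :: "nat \<Rightarrow> bool list \<Rightarrow> nat" where
  "f_lab n x = (THE j. 1 \<le> j \<and> j \<le> length (Sn n) \<and> Sn n ! (j - 1) = x)"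

definition strength :: "nat \<Rightarrow> (bool list \<Rightarrow> nat) \<Rightarrow> nat" where
  "strength n f = Max {f u + f v | u v. Q_adj n u v}"

end

theory Submission
  imports Defs "HOL-Library.List_Lexorder"
begin

lemma lex_less_Cons:
  "lex_less (a # x) (b # y) \<longleftrightarrow> (\<not> a \<and> b \<and> length x = length y) \<or> (a = b \<and> lex_less x y)"
proof
  assume "lex_less (a # x) (b # y)"
  then obtain k where k: "k < Suc (length x)" "\<forall>j<k. (a#x) ! j = (b#y) ! j" "\<not> (a#x) ! k" "(b#y) ! k"
    and l: "length x = length y" unfolding lex_less_def by auto
  show "(\<not> a \<and> b \<and> length x = length y) \<or> (a = b \<and> lex_less x y)"
  proof (cases k)
    case 0 then show ?thesis using k l by auto
  next
    case (Suc k')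
    have "a = b" using k(2) Suc by force
    moreover have "lex_less x y" unfolding lex_less_def
      using k Suc l by (auto intro!: exI[of _ k'])
    ultimately show ?thesis by simp
  qed
next
  assume h: "(\<not> a \<and> b \<and> length x = length y) \<or> (a = b \<and> lex_less x y)"
  then show "lex_less (a # x) (b # y)"
  proof
    assume "\<not> a \<and> b \<and> length x = length y" then show ?thesis
      unfolding lex_less_def by (auto intro!: exI[of _ 0])
  next
    assume "a = b \<and> lex_less x y"
    then obtain k where "a = b" "length x = length y" "k < length x" "\<forall>j<k. x ! j = y ! j" "\<not> x ! k" "y ! k"
      unfolding lex_less_def by auto
    then show ?thesis unfolding lex_less_def
      apply (intro conjI exI[of _ "Suc k"])
      apply simp_all
      apply (intro allI impI)
      subgoal for j by (cases j) auto
      done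
  qed
qed

lemma lex_less_iff: "length x = length y \<Longrightarrow> lex_less x y \<longleftrightarrow> x < y"
proof (induction x arbitrary: y)
  case Nil then show ?case by (simp add: lex_less_def)
next
  case (Cons a x)
  then obtain b y' where y: "y = b # y'" by (cases y) auto
  show ?case using Cons y by (auto simp: lex_less_Cons)
qed

lemma finite_len: "finite {u::bool list. length u = m \<and> P u}"
proof -
  have "{u::bool list. length u = m \<and> P u} \<subseteq> {xs. set xs \<subseteq> UNIV \<and> length xs = m}" by auto
  then show ?thesis using finite_lists_length_eq[of "UNIV::bool set" m] finite_subset by auto
qed

lemma S_seq_props:
  "sorted_wrt (<) (S_seq n i) \<and> set (S_seq n i) = {x \<in> bitstrings n. weight x = i}"
proof -
  let ?A = "{x \<in> bitstrings n. weight x = i}"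
  have fin: "finite ?A" using finite_len[of n "\<lambda>x. weight x = i"] by (simp add: bitstrings_def)
  have eq: "sorted_wrt lex_less xs \<longleftrightarrow> sorted_wrt (<) xs" if "set xs = ?A" for xs
  proof -
    have h: "\<And>a b. a \<in> set xs \<Longrightarrow> b \<in> set xs \<Longrightarrow> lex_less a b \<longleftrightarrow> a < b"
      using that by (auto simp: bitstrings_def lex_less_iff)
    show ?thesis
    proof
      assume "sorted_wrt lex_less xs" then show "sorted_wrt (<) xs"
        by (rule sorted_wrt_mono_rel[rotated]) (simp add: h)
    next
      assume "sorted_wrt (<) xs" then show "sorted_wrt lex_less xs"
        by (rule sorted_wrt_mono_rel[rotated]) (simp add: h)
    qed
  qed
  have ex: "\<exists>!xs. sorted_wrt lex_less xs \<and> set xs = ?A"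
  proof
    show "sorted_wrt lex_less (sorted_list_of_set ?A) \<and> set (sorted_list_of_set ?A) = ?A"
      using fin eq[of "sorted_list_of_set ?A"] by simp
  next
    fix xs assume a: "sorted_wrt lex_less xs \<and> set xs = ?A"
    then have "sorted_wrt (<) xs" using eq by blast
    then show "xs = sorted_list_of_set ?A"
      using fin a strict_sorted_equal[of xs "sorted_list_of_set ?A"] by simp
  qed
  have "sorted_wrt lex_less (S_seq n i) \<and> set (S_seq n i) = ?A"
    using theI'[OF ex] unfolding S_seq_def .
  then show ?thesis using eq by blast
qed


definition before :: "bool list \<Rightarrow> bool list \<Rightarrow> bool" where
 "before y x \<longleftrightarrow> (odd (weight y) \<and> odd (weight x) \<and> (weight y < weight x \<or> (weight y = weight x \<and> x < y)))
    \<or> (odd (weight y) \<and> even (weight x))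
    \<or> (even (weight y) \<and> even (weight x) \<and> (weight x < weight y \<or> (weight y = weight x \<and> y < x)))"

lemma before_asym: "before a b \<Longrightarrow> \<not> before b a"
proof
  assume h: "before a b" "before b a"
  have na: "\<not> (a < b \<and> b < a)" using less_asym by blast
  show False using h na unfolding before_def
    by (cases "odd (weight a)"; cases "odd (weight b)") auto
qed

lemma before_oo: "odd (weight y) \<Longrightarrow> odd (weight x) \<Longrightarrow> weight y < weight x \<Longrightarrow> before y x"
  by (simp add: before_def)
lemma before_oeq: "odd (weight x) \<Longrightarrow> weight y = weight x \<Longrightarrow> x < y \<Longrightarrow> before y x"
  by (simp add: before_def)
lemma before_oe: "odd (weight y) \<Longrightarrow> even (weight x) \<Longrightarrow> before y x"
  by (simp add: before_def)
lemma before_ee: "even (weight y) \<Longrightarrow> even (weight x) \<Longrightarrow> weight x < weight y \<Longrightarrow> before y x"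
  by (simp add: before_def)
lemma before_eeq: "even (weight x) \<Longrightarrow> weight y = weight x \<Longrightarrow> y < x \<Longrightarrow> before y x"
  by (simp add: before_def)

lemma sorted_wrt_concat_upt:
  assumes "\<And>j. j < k \<Longrightarrow> sorted_wrt P (f j)"
    and "\<And>j j' a b. j < j' \<Longrightarrow> j' < k \<Longrightarrow> a \<in> set (f j) \<Longrightarrow> b \<in> set (f j') \<Longrightarrow> P a b"
  shows "sorted_wrt P (concat (map f [0..<k]))"
  using assms
proof (induction k)
  case 0 then show ?case by simp
next
  case (Suc k)
  have "sorted_wrt P (concat (map f [0..<k]))" using Suc by auto
  moreover have "sorted_wrt P (f k)" using Suc by auto
  moreover have "\<forall>a\<in>set (concat (map f [0..<k])). \<forall>b\<in>set (f k). P a b"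
    using Suc.prems(2) by auto
  ultimately show ?case by (simp add: sorted_wrt_append)
qed

lemma weight_le: "weight x \<le> length x"
  unfolding weight_def by simp

lemma Sn_sorted:
  assumes "even n"
  shows "sorted_wrt before (Sn n)"
proof -
  let ?A = "concat (map (\<lambda>j. R_seq n (2*j+1)) [0..<n div 2])"
  let ?B = "concat (map (\<lambda>j. S_seq n (n - 2*j)) [0..<n div 2 + 1])"
  have sA: "sorted_wrt before ?A"
  proof (rule sorted_wrt_concat_upt)
    fix j assume "j < n div 2"
    show "sorted_wrt before (R_seq n (2*j+1))"
      unfolding R_seq_def sorted_wrt_rev
      apply (rule sorted_wrt_mono_rel[rotated, of "(<)"])
      using S_seq_props[of n "2*j+1"] apply simp
      using S_seq_props[of n "2*j+1"] by (intro before_oeq) auto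
  next
    fix j j' a b assume "j < j'" "a \<in> set (R_seq n (2*j+1))" "b \<in> set (R_seq n (2*j'+1))"
    then show "before a b" using S_seq_props[of n "2*j+1"] S_seq_props[of n "2*j'+1"]
      by (intro before_oo) (auto simp: R_seq_def)
  qed
  have sB: "sorted_wrt before ?B"
  proof (rule sorted_wrt_concat_upt)
    fix j assume j: "j < n div 2 + 1"
    have "sorted_wrt (<) (S_seq n (n - 2*j))" using S_seq_props[of n "n - 2*j"] by simp
    then show "sorted_wrt before (S_seq n (n - 2*j))"
      apply (rule sorted_wrt_mono_rel[rotated])
      using S_seq_props[of n "n - 2*j"] j assms by (intro before_eeq) auto
  next
    fix j j' a b assume "j < j'" "j' < n div 2 + 1" "a \<in> set (S_seq n (n - 2*j))" "b \<in> set (S_seq n (n - 2*j'))"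
    then show "before a b" using S_seq_props[of n "n - 2*j"] S_seq_props[of n "n - 2*j'"] assms
      by (intro before_ee) auto
  qed
  have sAB: "\<forall>a\<in>set ?A. \<forall>b\<in>set ?B. before a b"
  proof (intro ballI)
    fix a b assume "a \<in> set ?A" "b \<in> set ?B"
    then obtain j j' where "a \<in> set (R_seq n (2*j+1))" "b \<in> set (S_seq n (n - 2*j'))" "j' < n div 2 + 1"
      by auto
    then show "before a b" using S_seq_props[of n "2*j+1"] S_seq_props[of n "n - 2*j'"] assms
      by (intro before_oe) (auto simp: R_seq_def)
  qed
  show ?thesis unfolding Sn_def using assms sA sB sAB by (simp add: sorted_wrt_append)
qed

lemma Sn_set:
  assumes "even n"
  shows "set (Sn n) = bitstrings n"
proof
  show "set (Sn n) \<subseteq> bitstrings n"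
    unfolding Sn_def using assms by (auto simp: R_seq_def S_seq_props)
next
  show "bitstrings n \<subseteq> set (Sn n)"
  proof
    fix x assume x: "x \<in> bitstrings n"
    then have le: "weight x \<le> n" using weight_le[of x] by (simp add: bitstrings_def)
    show "x \<in> set (Sn n)"
    proof (cases "odd (weight x)")
      case True
      then obtain j where j: "weight x = 2*j+1" by (metis oddE)
      have "j < n div 2" using j le assms by presburger
      then show ?thesis unfolding Sn_def using assms x j
        by (auto simp: R_seq_def S_seq_props intro!: bexI[of _ j])
    next
      case False
      then obtain j where j: "weight x = n - 2*j" "j < n div 2 + 1"
        using le assms by (intro that[of "(n - weight x) div 2"]) presburger+
      then show ?thesis unfolding Sn_def using assms x j
        by (auto simp: S_seq_props intro!: bexI[of _ j])
    qed
  qed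
qed

lemma sorted_index_card:
  assumes "sorted_wrt P xs" "\<And>a b. P a b \<Longrightarrow> \<not> P b a" "i < length xs"
  shows "card {y \<in> set xs. P y (xs!i)} = i" and "distinct xs"
proof -
  have irr: "\<not> P a a" for a using assms(2) by blast
  show d: "distinct xs"
    unfolding distinct_conv_nth
  proof (intro allI impI)
    fix j k assume "j < length xs" "k < length xs" "j \<noteq> k"
    then show "xs ! j \<noteq> xs ! k" using assms(1) irr
      by (metis linorder_neq_iff sorted_wrt_iff_nth_less)
  qed
  have "{y \<in> set xs. P y (xs!i)} = set (take i xs)"
  proof
    show "{y \<in> set xs. P y (xs!i)} \<subseteq> set (take i xs)"
    proof
      fix y assume "y \<in> {y \<in> set xs. P y (xs!i)}"
      then obtain j where j: "j < length xs" "y = xs ! j" "P y (xs!i)" by (auto simp: in_set_conv_nth)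
      have "j < i"
      proof (rule ccontr)
        assume "\<not> j < i"
        then have "j = i \<or> i < j" by auto
        then show False
          using j assms irr sorted_wrt_iff_nth_less[of P xs] by metis
      qed
      then show "y \<in> set (take i xs)" using j by (auto simp: in_set_conv_nth)
    qed
  next
    show "set (take i xs) \<subseteq> {y \<in> set xs. P y (xs!i)}"
    proof
      fix y assume "y \<in> set (take i xs)"
      then obtain j where "j < i" "y = xs ! j" using assms(3) by (auto simp: in_set_conv_nth)
      then show "y \<in> {y \<in> set xs. P y (xs!i)}"
        using assms(1,3) sorted_wrt_iff_nth_less[of P xs] by auto
    qed
  qed
  then show "card {y \<in> set xs. P y (xs!i)} = i"
    using d assms(3) by (simp add: distinct_card)
qed

lemma f_lab_formula:
  assumes "even n" "length x = n"
  shows "f_lab n x = Suc (card {y. length y = n \<and> before y x})"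
proof -
  have s: "sorted_wrt before (Sn n)" using Sn_sorted assms by auto
  have xs: "x \<in> set (Sn n)" using Sn_set assms by (auto simp: bitstrings_def)
  then obtain i where i: "i < length (Sn n)" "Sn n ! i = x" by (auto simp: in_set_conv_nth)
  have d: "distinct (Sn n)" using sorted_index_card(2)[OF s before_asym i(1)] .
  have c: "card {y \<in> set (Sn n). before y x} = i" using sorted_index_card(1)[OF s before_asym i(1)] i by simp
  have "{y \<in> set (Sn n). before y x} = {y. length y = n \<and> before y x}"
    using Sn_set assms by (auto simp: bitstrings_def)
  then have c2: "card {y. length y = n \<and> before y x} = i" using c by simp
  have "(THE j. 1 \<le> j \<and> j \<le> length (Sn n) \<and> Sn n ! (j - 1) = x) = Suc i"
  proof (rule the_equality)
    show "1 \<le> Suc i \<and> Suc i \<le> length (Sn n) \<and> Sn n ! (Suc i - 1) = x" using i by auto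
  next
    fix j assume j: "1 \<le> j \<and> j \<le> length (Sn n) \<and> Sn n ! (j - 1) = x"
    then have "j - 1 = i" using d i nth_eq_iff_index_eq[of "Sn n" "j-1" i] by auto
    then show "j = Suc i" using j by auto
  qed
  then show ?thesis unfolding f_lab_def using c2 by simp
qed


definition NW :: "nat \<Rightarrow> (nat \<Rightarrow> bool) \<Rightarrow> nat" where
  "NW m P = card {u::bool list. length u = m \<and> P (weight u)}"

lemma weight_True[simp]: "weight (True # v) = Suc (weight v)"
  and weight_False[simp]: "weight (False # v) = weight v"
  and weight_Nil[simp]: "weight [] = 0"
  by (auto simp: weight_def)

lemma card_split:
  "card {u::bool list. length u = Suc m \<and> Q u}
     = card {v. length v = m \<and> Q (True # v)} + card {v. length v = m \<and> Q (False # v)}"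
proof -
  have e: "{u::bool list. length u = Suc m \<and> Q u}
     = (Cons True) ` {v. length v = m \<and> Q (True # v)} \<union> (Cons False) ` {v. length v = m \<and> Q (False # v)}"
  proof (rule set_eqI, rule iffI)
    fix u assume "u \<in> {u::bool list. length u = Suc m \<and> Q u}"
    then obtain a v where "u = a # v" "length v = m" "Q (a # v)" by (cases u) auto
    then show "u \<in> (Cons True) ` {v. length v = m \<and> Q (True # v)} \<union> (Cons False) ` {v. length v = m \<and> Q (False # v)}"
      by (cases a) auto
  qed auto
  show ?thesis unfolding e
    by (subst card_Un_disjoint) (auto simp: finite_len card_image)
qed

lemma NW_Suc: "NW (Suc m) P = NW m (\<lambda>j. P (Suc j)) + NW m P"
  unfolding NW_def by (subst card_split) simp

lemma NW_0: "NW 0 P = (if P 0 then 1 else 0)"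
proof -
  have "{u::bool list. length u = 0 \<and> P (weight u)} = (if P 0 then {[]} else {})" by auto
  then show ?thesis unfolding NW_def by simp
qed

lemma NW_sum: "NW m P = (\<Sum>j\<le>m. if P j then m choose j else 0)"
proof (induction m arbitrary: P)
  case 0 then show ?case by (simp add: NW_0)
next
  case (Suc m)
  have a: "(\<Sum>j\<le>Suc m. if P j then Suc m choose j else 0)
      = (if P 0 then 1 else 0) + (\<Sum>j\<le>m. if P (Suc j) then Suc m choose Suc j else 0)"
    by (subst sum.atMost_Suc_shift) simp
  have b: "(\<Sum>j\<le>m. if P (Suc j) then Suc m choose Suc j else 0)
      = (\<Sum>j\<le>m. if P (Suc j) then m choose j else 0) + (\<Sum>j\<le>m. if P (Suc j) then m choose Suc j else 0)"
    unfolding sum.distrib[symmetric] by (rule sum.cong) auto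
  have c: "(\<Sum>j\<le>m. if P j then m choose j else 0)
      = (if P 0 then 1 else 0) + (\<Sum>j\<le>m. if P (Suc j) then m choose Suc j else 0)"
  proof -
    have "(\<Sum>j\<le>m. if P j then m choose j else 0)
      = (if P 0 then 1 else 0) + (\<Sum>j<m. if P (Suc j) then m choose Suc j else 0)"
    proof (cases m)
      case 0 then show ?thesis by simp
    next
      case (Suc m') then show ?thesis
        by (simp only: sum.atMost_Suc_shift lessThan_Suc_atMost) simp
    qed
    also have "(\<Sum>j<m. if P (Suc j) then m choose Suc j else 0) = (\<Sum>j\<le>m. if P (Suc j) then m choose Suc j else 0)"
      by (simp add: lessThan_Suc_atMost[symmetric])
    finally show ?thesis .
  qed
  show ?case using Suc.IH[of P] Suc.IH[of "\<lambda>j. P (Suc j)"] a b c by (simp add: NW_Suc)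
qed

lemma NW_eq: "NW m (\<lambda>j. j = k) = m choose k"
  unfolding NW_sum by (simp add: sum.delta)

lemma NW_all: "NW m (\<lambda>j. True) = 2 ^ m"
  unfolding NW_sum by (simp add: choose_row_sum)

lemma NW_alt:
  assumes "odd k"
  shows "NW (Suc p) (\<lambda>j. even j \<and> k < j) = NW (Suc p) (\<lambda>j. odd j \<and> k < j) + (p choose k)"
proof -
  have "NW (Suc p) (\<lambda>j. even j \<and> k < j) = NW p (\<lambda>j. odd j \<and> k \<le> j) + NW p (\<lambda>j. even j \<and> k < j)"
    by (simp add: NW_Suc Suc_le_eq[symmetric])
  moreover have "NW (Suc p) (\<lambda>j. odd j \<and> k < j) = NW p (\<lambda>j. even j \<and> k \<le> j) + NW p (\<lambda>j. odd j \<and> k < j)"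
    by (simp add: NW_Suc Suc_le_eq[symmetric])
  moreover have "NW p (\<lambda>j. odd j \<and> k \<le> j) + NW p (\<lambda>j. even j \<and> k < j)
     = NW p (\<lambda>j. even j \<and> k \<le> j) + NW p (\<lambda>j. odd j \<and> k < j) + NW p (\<lambda>j. j = k)"
    unfolding NW_sum sum.distrib[symmetric]
    by (rule sum.cong) (use assms in auto)
  ultimately show ?thesis by (simp add: NW_eq)
qed


lemma before_iff: "before y x \<longleftrightarrow> (if odd (weight y) then (if odd (weight x) then weight y < weight x \<or> (weight y = weight x \<and> x < y) else True)
   else (if odd (weight x) then False else weight x < weight y \<or> (weight y = weight x \<and> y < x)))"
  unfolding before_def by (cases "odd (weight y)"; cases "odd (weight x)") simp_all

lemma p_TT1: "even (weight z) \<Longrightarrow> before (True#True#u) (True#False#z) \<longleftrightarrow> odd (weight u) \<and> weight u < weight z"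
  unfolding before_iff by (cases "even (weight u)") (simp_all add: less_bool_def, presburger)
lemma p_TF1: "even (weight z) \<Longrightarrow> before (True#False#u) (True#False#z) \<longleftrightarrow> (even (weight u) \<and> weight u < weight z) \<or> (weight u = weight z \<and> z < u)"
  unfolding before_iff by (cases "even (weight u)") (simp_all add: less_bool_def, presburger?)
lemma p_FT1: "even (weight z) \<Longrightarrow> before (False#True#u) (True#False#z) \<longleftrightarrow> even (weight u) \<and> weight u < weight z"
  unfolding before_iff by (cases "even (weight u)") (simp_all add: less_bool_def, presburger?)
lemma p_FF1: "even (weight z) \<Longrightarrow> before (False#False#u) (True#False#z) \<longleftrightarrow> odd (weight u) \<and> weight u < weight z"
  unfolding before_iff by (cases "even (weight u)") (simp_all add: less_bool_def, presburger?)

lemma p_TT2: "odd (weight z) \<Longrightarrow> before (True#True#u) (True#False#z) \<longleftrightarrow> odd (weight u) \<or> (even (weight u) \<and> weight z < weight u)"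
  unfolding before_iff by (cases "even (weight u)") (simp_all add: less_bool_def, presburger?)
lemma p_TF2: "odd (weight z) \<Longrightarrow> before (True#False#u) (True#False#z) \<longleftrightarrow> (even (weight u) \<or> (odd (weight u) \<and> weight z < weight u)) \<or> (weight u = weight z \<and> u < z)"
  unfolding before_iff by (cases "even (weight u)") (simp_all add: less_bool_def, presburger?)
lemma p_FT2: "odd (weight z) \<Longrightarrow> before (False#True#u) (True#False#z) \<longleftrightarrow> even (weight u) \<or> (odd (weight u) \<and> weight z \<le> weight u)"
  unfolding before_iff by (cases "even (weight u)") (simp_all add: less_bool_def, presburger?)
lemma p_FF2: "odd (weight z) \<Longrightarrow> before (False#False#u) (True#False#z) \<longleftrightarrow> odd (weight u) \<or> (even (weight u) \<and> weight z < weight u)"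
  unfolding before_iff by (cases "even (weight u)") (simp_all add: less_bool_def, presburger?)


lemma weight_comp: "weight (map Not u) = length u - weight u"
proof (induction u)
  case Nil then show ?case by simp
next
  case (Cons a u)
  have "weight u \<le> length u" by (rule weight_le)
  then show ?case using Cons by (cases a) (auto simp: Suc_diff_le)
qed

lemma comp_less: "length u = length z \<Longrightarrow> (map Not u < map Not z) \<longleftrightarrow> z < u"
proof (induction u arbitrary: z)
  case Nil then show ?case by simp
next
  case (Cons a u)
  then obtain b z' where "z = b # z'" by (cases z) auto
  then show ?case using Cons by (cases a; cases b) (auto simp: less_bool_def)
qed

lemma pc1:
  assumes "even m" "length u = m" "length z = m" "even (weight z)"
  shows "before (map Not u) (map Not z) \<longleftrightarrow> odd (weight u) \<or> (even (weight u) \<and> weight u < weight z) \<or> (weight u = weight z \<and> z < u)"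
proof -
  have "weight u \<le> m" "weight z \<le> m" using weight_le assms by metis+
  moreover have "m - weight z < m - weight u \<longleftrightarrow> weight u < weight z"
    "m - weight u < m - weight z \<longleftrightarrow> weight z < weight u"
    "m - weight u = m - weight z \<longleftrightarrow> weight u = weight z" using calculation by arith+
  ultimately show ?thesis using assms unfolding before_iff weight_comp
    by (cases "even (weight u)") (simp_all add: comp_less, presburger?)
qed

lemma pc2:
  assumes "even m" "length u = m" "length z = m" "odd (weight z)"
  shows "before (map Not u) (map Not z) \<longleftrightarrow> (odd (weight u) \<and> weight z < weight u) \<or> (weight u = weight z \<and> u < z)"
proof -
  have "weight u \<le> m" "weight z \<le> m" using weight_le assms by metis+
  moreover have "m - weight z < m - weight u \<longleftrightarrow> weight u < weight z"
    "m - weight u < m - weight z \<longleftrightarrow> weight z < weight u"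
    "m - weight u = m - weight z \<longleftrightarrow> weight u = weight z" using calculation by arith+
  ultimately show ?thesis using assms unfolding before_iff weight_comp
    by (cases "even (weight u)") (simp_all add: comp_less, presburger?)
qed


definition Gc :: "bool list \<Rightarrow> nat" where
  "Gc z = card {u. length u = length z \<and> weight u = weight z \<and> z < u}"
definition Lc :: "bool list \<Rightarrow> nat" where
  "Lc z = card {u. length u = length z \<and> weight u = weight z \<and> u < z}"

lemma card_or:
  assumes "\<not> P w"
  shows "card {u::bool list. length u = m \<and> (P (weight u) \<or> (weight u = w \<and> R u))}
     = NW m P + card {u. length u = m \<and> weight u = w \<and> R u}"
proof -
  have e: "{u::bool list. length u = m \<and> (P (weight u) \<or> (weight u = w \<and> R u))}
     = {u. length u = m \<and> P (weight u)} \<union> {u. length u = m \<and> weight u = w \<and> R u}" by auto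
  have d: "{u::bool list. length u = m \<and> P (weight u)} \<inter> {u. length u = m \<and> weight u = w \<and> R u} = {}"
    using assms by auto
  show ?thesis unfolding e NW_def
    by (rule card_Un_disjoint) (auto simp: finite_len d)
qed

lemma card_pre:
  "card {y::bool list. length y = Suc (Suc m) \<and> Q y}
   = (card {u. length u = m \<and> Q (True#True#u)} + card {u. length u = m \<and> Q (True#False#u)})
   + (card {u. length u = m \<and> Q (False#True#u)} + card {u. length u = m \<and> Q (False#False#u)})"
  using card_split[of "Suc m" Q] card_split[of m "\<lambda>v. Q (True#v)"] card_split[of m "\<lambda>v. Q (False#v)"]
  by simp

lemma card_comp:
  "card {u::bool list. length u = m \<and> before u c} = card {u. length u = m \<and> before (map Not u) c}"
proof -
  have "{u::bool list. length u = m \<and> before u c} = (map Not) ` {u. length u = m \<and> before (map Not u) c}"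
  proof (rule set_eqI, rule iffI)
    fix u assume "u \<in> {u::bool list. length u = m \<and> before u c}"
    then show "u \<in> (map Not) ` {u. length u = m \<and> before (map Not u) c}"
      by (intro image_eqI[of _ _ "map Not u"]) (simp_all add: comp_def)
  qed auto
  moreover have "inj (map Not :: bool list \<Rightarrow> bool list)"
  proof (rule injI)
    fix a b :: "bool list" assume "map Not a = map Not b"
    then have "map Not (map Not a) = map Not (map Not b)" by simp
    then show "a = b" by (simp add: comp_def)
  qed
  ultimately show ?thesis by (simp add: card_image inj_on_subset[of _ UNIV])
qed

lemma V1:
  assumes "length z = m" "even (weight z)"
  shows "card {y. length y = Suc (Suc m) \<and> before y (True#False#z)}
    = (NW m (\<lambda>j. odd j \<and> j < weight z) + (NW m (\<lambda>j. even j \<and> j < weight z) + Gc z))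
      + (NW m (\<lambda>j. even j \<and> j < weight z) + NW m (\<lambda>j. odd j \<and> j < weight z))"
proof -
  have a: "card {u. length u = m \<and> before (True#True#u) (True#False#z)} = NW m (\<lambda>j. odd j \<and> j < weight z)"
    unfolding NW_def using p_TT1[OF assms(2)] by simp
  have b: "card {u. length u = m \<and> before (True#False#u) (True#False#z)} = NW m (\<lambda>j. even j \<and> j < weight z) + Gc z"
    unfolding Gc_def using p_TF1[OF assms(2)] assms(1) card_or[of "\<lambda>j. even j \<and> j < weight z" "weight z" m "\<lambda>u. z < u"]
    by simp
  have c: "card {u. length u = m \<and> before (False#True#u) (True#False#z)} = NW m (\<lambda>j. even j \<and> j < weight z)"
    unfolding NW_def using p_FT1[OF assms(2)] by simp
  have d: "card {u. length u = m \<and> before (False#False#u) (True#False#z)} = NW m (\<lambda>j. odd j \<and> j < weight z)"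
    unfolding NW_def using p_FF1[OF assms(2)] by simp
  show ?thesis unfolding card_pre a b c d ..
qed

lemma V2:
  assumes "length z = m" "odd (weight z)"
  shows "card {y. length y = Suc (Suc m) \<and> before y (True#False#z)}
    = (NW m (\<lambda>j. odd j \<or> (even j \<and> weight z < j)) + (NW m (\<lambda>j. even j \<or> (odd j \<and> weight z < j)) + Lc z))
      + (NW m (\<lambda>j. even j \<or> (odd j \<and> weight z \<le> j)) + NW m (\<lambda>j. odd j \<or> (even j \<and> weight z < j)))"
proof -
  have a: "card {u. length u = m \<and> before (True#True#u) (True#False#z)} = NW m (\<lambda>j. odd j \<or> (even j \<and> weight z < j))"
    unfolding NW_def using p_TT2[OF assms(2)] by simp
  have b: "card {u. length u = m \<and> before (True#False#u) (True#False#z)} = NW m (\<lambda>j. even j \<or> (odd j \<and> weight z < j)) + Lc z"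
    unfolding Lc_def using p_TF2[OF assms(2)] assms card_or[of "\<lambda>j. even j \<or> (odd j \<and> weight z < j)" "weight z" m "\<lambda>u. u < z"]
    by simp
  have c: "card {u. length u = m \<and> before (False#True#u) (True#False#z)} = NW m (\<lambda>j. even j \<or> (odd j \<and> weight z \<le> j))"
    unfolding NW_def using p_FT2[OF assms(2)] by simp
  have d: "card {u. length u = m \<and> before (False#False#u) (True#False#z)} = NW m (\<lambda>j. odd j \<or> (even j \<and> weight z < j))"
    unfolding NW_def using p_FF2[OF assms(2)] by simp
  show ?thesis unfolding card_pre a b c d ..
qed

lemma V1c:
  assumes "even m" "length z = m" "even (weight z)"
  shows "card {u. length u = m \<and> before u (map Not z)} = NW m (\<lambda>j. odd j \<or> (even j \<and> j < weight z)) + Gc z"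
proof -
  have "card {u. length u = m \<and> before (map Not u) (map Not z)}
      = card {u::bool list. length u = m \<and> ((odd (weight u) \<or> (even (weight u) \<and> weight u < weight z)) \<or> (weight u = weight z \<and> z < u))}"
    using pc1[OF assms(1) _ assms(2,3)] by (metis (lifting) disj_assoc)
  also have "\<dots> = NW m (\<lambda>j. odd j \<or> (even j \<and> j < weight z)) + Gc z"
    unfolding Gc_def using assms card_or[of "\<lambda>j. odd j \<or> (even j \<and> j < weight z)" "weight z" m "\<lambda>u. z < u"]
    by simp
  finally show ?thesis using card_comp by simp
qed

lemma V2c:
  assumes "even m" "length z = m" "odd (weight z)"
  shows "card {u. length u = m \<and> before u (map Not z)} = NW m (\<lambda>j. odd j \<and> weight z < j) + Lc z"
proof -
  have "card {u. length u = m \<and> before (map Not u) (map Not z)}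
      = card {u::bool list. length u = m \<and> ((odd (weight u) \<and> weight z < weight u) \<or> (weight u = weight z \<and> u < z))}"
    using pc2[OF assms(1) _ assms(2,3)] by (metis (lifting))
  also have "\<dots> = NW m (\<lambda>j. odd j \<and> weight z < j) + Lc z"
    unfolding Lc_def using assms card_or[of "\<lambda>j. odd j \<and> weight z < j" "weight z" m "\<lambda>u. u < z"]
    by simp
  finally show ?thesis using card_comp by simp
qed


lemma idA:
  assumes "odd k"
  shows "(NW m (\<lambda>j. odd j \<and> j < Suc k) + NW m (\<lambda>j. even j \<and> j < Suc k) + NW m (\<lambda>j. even j \<and> j < Suc k) + NW m (\<lambda>j. odd j \<and> j < Suc k))
   + (NW m (\<lambda>j. odd j \<or> (even j \<and> k < j)) + NW m (\<lambda>j. even j \<or> (odd j \<and> k < j)) + NW m (\<lambda>j. even j \<or> (odd j \<and> k \<le> j)) + NW m (\<lambda>j. odd j \<or> (even j \<and> k < j)))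
   = NW m (\<lambda>j. odd j \<or> (even j \<and> j < Suc k)) + 3 * NW m (\<lambda>j. True) + NW m (\<lambda>j. j = k) + NW m (\<lambda>j. even j \<and> k < j)"
  unfolding NW_sum sum.distrib[symmetric] sum_distrib_left
proof (rule sum.cong)
  fix j
  show "(if odd j \<and> j < Suc k then m choose j else 0) + (if even j \<and> j < Suc k then m choose j else 0) +
         (if even j \<and> j < Suc k then m choose j else 0) + (if odd j \<and> j < Suc k then m choose j else 0) +
         ((if odd j \<or> even j \<and> k < j then m choose j else 0) + (if even j \<or> odd j \<and> k < j then m choose j else 0) +
          (if even j \<or> odd j \<and> k \<le> j then m choose j else 0) + (if odd j \<or> even j \<and> k < j then m choose j else 0)) =
         (if odd j \<or> even j \<and> j < Suc k then m choose j else 0) + 3 * (if True then m choose j else 0) +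
         (if j = k then m choose j else 0) + (if even j \<and> k < j then m choose j else 0)"
    using assms by (cases "even j"; cases "j < k"; cases "j = k") simp_all
qed simp

lemma idB:
  assumes "even k"
  shows "(NW m (\<lambda>j. odd j \<and> j < k) + NW m (\<lambda>j. even j \<and> j < k) + NW m (\<lambda>j. even j \<and> j < k) + NW m (\<lambda>j. odd j \<and> j < k))
   + (NW m (\<lambda>j. odd j \<or> (even j \<and> Suc k < j)) + NW m (\<lambda>j. even j \<or> (odd j \<and> Suc k < j)) + NW m (\<lambda>j. even j \<or> (odd j \<and> Suc k \<le> j)) + NW m (\<lambda>j. odd j \<or> (even j \<and> Suc k < j)))
   + NW m (\<lambda>j. j = k) + NW m (\<lambda>j. j = Suc k)
   = NW m (\<lambda>j. odd j \<or> (even j \<and> j < k)) + 3 * NW m (\<lambda>j. True) + NW m (\<lambda>j. even j \<and> Suc k < j)"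
  unfolding NW_sum sum.distrib[symmetric] sum_distrib_left
proof (rule sum.cong)
  fix j
  show "(if odd j \<and> j < k then m choose j else 0) + (if even j \<and> j < k then m choose j else 0) +
         (if even j \<and> j < k then m choose j else 0) + (if odd j \<and> j < k then m choose j else 0) +
         ((if odd j \<or> even j \<and> Suc k < j then m choose j else 0) + (if even j \<or> odd j \<and> Suc k < j then m choose j else 0) +
          (if even j \<or> odd j \<and> Suc k \<le> j then m choose j else 0) + (if odd j \<or> even j \<and> Suc k < j then m choose j else 0)) +
         (if j = k then m choose j else 0) + (if j = Suc k then m choose j else 0) =
         (if odd j \<or> even j \<and> j < k then m choose j else 0) + 3 * (if True then m choose j else 0) +
         (if even j \<and> Suc k < j then m choose j else 0)"
    using assms by (cases "even j"; cases "j < k"; cases "j = k"; cases "j = Suc k") simp_all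
qed simp


lemma mainL:
  assumes m: "even m" "m \<ge> 2" and l: "length z1 = m" "length z2 = m" and e: "even (weight z1)"
    and w: "weight z1 = Suc (weight z2) \<or> weight z2 = Suc (weight z1)"
  shows "f_lab (Suc (Suc m)) (True#False#z1) + f_lab (Suc (Suc m)) (True#False#z2)
     \<le> f_lab m (map Not z1) + f_lab m (map Not z2) + 3 * 2 ^ m + ((m - 1) choose (m div 2)) + (m choose (m div 2))"
proof -
  have ev: "even (Suc (Suc m))" using m by simp
  have fx: "f_lab (Suc (Suc m)) (True#False#z1) = Suc (card {y. length y = Suc (Suc m) \<and> before y (True#False#z1)})"
    using f_lab_formula[OF ev] l by simp
  have fy: "f_lab (Suc (Suc m)) (True#False#z2) = Suc (card {y. length y = Suc (Suc m) \<and> before y (True#False#z2)})"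
    using f_lab_formula[OF ev] l by simp
  have fcx: "f_lab m (map Not z1) = Suc (card {y. length y = m \<and> before y (map Not z1)})"
    using f_lab_formula[OF m(1)] l by simp
  have fcy: "f_lab m (map Not z2) = Suc (card {y. length y = m \<and> before y (map Not z2)})"
    using f_lab_formula[OF m(1)] l by simp
  have o2: "odd (weight z2)" using w e by auto
  note v = V1[OF l(1) e] V2[OF l(2) o2] V1c[OF m(1) l(1) e] V2c[OF m(1) l(2) o2]
  obtain p where p: "m = Suc p" using m(2) by (cases m) auto
  have alt: "NW m (\<lambda>j. even j \<and> weight z2 < j) = NW m (\<lambda>j. odd j \<and> weight z2 < j) + (p choose weight z2)"
    using NW_alt[OF o2, of p] p by simp
  have pd: "p choose (p div 2) = p choose (m div 2)"
  proof -
    have "p div 2 \<le> p" by simp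
    moreover have "p - p div 2 = m div 2" using p m by presburger
    ultimately show ?thesis using binomial_symmetric[of "p div 2" p] by simp
  qed
  have b1: "m choose weight z2 \<le> m choose (m div 2)" by (rule binomial_maximum)
  have b2: "p choose weight z2 \<le> (m - 1) choose (m div 2)" using binomial_maximum[of p "weight z2"] pd p by simp
  from w show ?thesis
  proof
    assume A: "weight z1 = Suc (weight z2)"
    note id = idA[OF o2, of m, unfolded A[symmetric]]
    show ?thesis using fx fy fcx fcy v id alt b1 b2 unfolding NW_all NW_eq by linarith
  next
    assume B: "weight z2 = Suc (weight z1)"
    note id = idB[OF e, of m, unfolded B[symmetric]]
    have b3: "p choose weight z2 \<le> m choose weight z2" using p B by simp
    show ?thesis using fx fy fcx fcy v id alt b3 unfolding NW_all NW_eq by linarith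
  qed
qed


lemma weight_card: "weight z = card {i. i < length z \<and> z ! i}"
  unfolding weight_def by (simp add: length_filter_conv_card)

lemma adj_weight:
  assumes "length z1 = m" "length z2 = m" "card {i. i < m \<and> z1 ! i \<noteq> z2 ! i} = 1"
  shows "weight z1 = Suc (weight z2) \<or> weight z2 = Suc (weight z1)"
proof -
  obtain k where k: "{i. i < m \<and> z1 ! i \<noteq> z2 ! i} = {k}" using card_1_singletonE[OF assms(3)] by blast
  then have km: "k < m" and kd: "z1 ! k \<noteq> z2 ! k" by auto
  have same: "\<And>i. i < m \<Longrightarrow> i \<noteq> k \<Longrightarrow> z1 ! i = z2 ! i" using k by blast
  let ?S1 = "{i. i < m \<and> z1 ! i}" and ?S2 = "{i. i < m \<and> z2 ! i}"
  have fin: "finite ?S1" "finite ?S2" by auto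
  show ?thesis
  proof (cases "z1 ! k")
    case True
    then have "?S1 = insert k ?S2" "k \<notin> ?S2" using same km kd by auto
    then have "card ?S1 = Suc (card ?S2)" using fin by simp
    then show ?thesis using assms by (simp add: weight_card)
  next
    case False
    then have "?S2 = insert k ?S1" "k \<notin> ?S1" using same km kd by auto
    then have "card ?S2 = Suc (card ?S1)" using fin by simp
    then show ?thesis using assms by (simp add: weight_card)
  qed
qed

lemma strength_ge:
  assumes "Q_adj m u v"
  shows "f u + f v \<le> strength m f"
proof -
  have "{f u + f v | u v. Q_adj m u v} \<subseteq> (\<lambda>(u, v). f u + f v) ` ({u::bool list. length u = m \<and> True} \<times> {u. length u = m \<and> True})"
    unfolding Q_adj_def by auto
  then have "finite {f u + f v | u v. Q_adj m u v}"
    using finite_len[of m "\<lambda>_. True"] by (meson finite_SigmaI finite_imageI finite_subset)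
  then show ?thesis unfolding strength_def using assms by (intro Max_ge) auto
qed

lemma Q_adj_sym: "Q_adj m u v \<Longrightarrow> Q_adj m v u"
proof -
  assume a: "Q_adj m u v"
  have "{i. i < m \<and> v ! i \<noteq> u ! i} = {i. i < m \<and> u ! i \<noteq> v ! i}" by auto
  then show ?thesis using a unfolding Q_adj_def by simp
qed

lemma Q_adj_comp: "Q_adj m u v \<Longrightarrow> Q_adj m (map Not u) (map Not v)"
proof -
  assume a: "Q_adj m u v"
  have "{i. i < m \<and> map Not u ! i \<noteq> map Not v ! i} = {i. i < m \<and> u ! i \<noteq> v ! i}"
    using a unfolding Q_adj_def by auto
  then show ?thesis using a unfolding Q_adj_def by simp
qed

lemma Q_adj_tail:
  assumes "Q_adj (Suc (Suc m)) (a#b#u) (a#b#v)"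
  shows "Q_adj m u v"
proof -
  have "{i. i < Suc (Suc m) \<and> (a#b#u) ! i \<noteq> (a#b#v) ! i} = (\<lambda>i. Suc (Suc i)) ` {i. i < m \<and> u ! i \<noteq> v ! i}"
  proof (rule set_eqI, rule iffI)
    fix i assume "i \<in> {i. i < Suc (Suc m) \<and> (a#b#u) ! i \<noteq> (a#b#v) ! i}"
    then show "i \<in> (\<lambda>i. Suc (Suc i)) ` {i. i < m \<and> u ! i \<noteq> v ! i}"
      by (cases i; cases "i - 1") (auto intro: image_eqI)
  qed auto
  moreover have "inj (\<lambda>i::nat. Suc (Suc i))" by (rule injI) simp
  ultimately have "card {i. i < m \<and> u ! i \<noteq> v ! i} = 1"
    using assms unfolding Q_adj_def by (simp add: card_image inj_on_subset[of _ UNIV])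
  then show ?thesis using assms unfolding Q_adj_def by simp
qed

theorem theorem2p8:
  fixes n :: nat and x y :: "bool list"
  assumes "n \<ge> 5" and "even n"
    and "Q_adj n x y"
    and "f_lab n x + f_lab n y = strength n (f_lab n)"
    and "take 2 x = [True, False]" and "take 2 y = [True, False]"
  shows "strength n (f_lab n) \<le> strength (n - 2) (f_lab (n - 2)) + 3 * 2 ^ (n - 2)
           + ((n - 3) choose (nat \<lceil>real (n - 3) / 2\<rceil>))
           + ((n - 2) choose (nat \<lceil>real (n - 2) / 2\<rceil>))"
proof -
  define m where "m = n - 2"
  have n: "n = Suc (Suc m)" using assms(1) m_def by simp
  have mev: "even m" "m \<ge> 2" using assms(1,2) n by auto
  have lx: "length x = n" and ly: "length y = n" using assms(3) unfolding Q_adj_def by auto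
  define z1 where "z1 = drop 2 x"
  define z2 where "z2 = drop 2 y"
  have x: "x = True # False # z1" using assms(5) z1_def by (metis append_take_drop_id append_Cons append_Nil)
  have y: "y = True # False # z2" using assms(6) z2_def by (metis append_take_drop_id append_Cons append_Nil)
  have l1: "length z1 = m" and l2: "length z2 = m" using lx ly n x y by auto
  have adj: "Q_adj m z1 z2" using assms(3) Q_adj_tail unfolding x y n by blast
  have w: "weight z1 = Suc (weight z2) \<or> weight z2 = Suc (weight z1)"
    using adj_weight[OF l1 l2] adj unfolding Q_adj_def by blast
  define K where "K = 3 * 2 ^ m + ((m - 1) choose (m div 2)) + (m choose (m div 2))"
  have main: "f_lab n x + f_lab n y \<le> strength m (f_lab m) + K"
  proof (cases "even (weight z1)")
    case True
    have "f_lab n x + f_lab n y \<le> f_lab m (map Not z1) + f_lab m (map Not z2) + K"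
      using mainL[OF mev l1 l2 True w] unfolding x y n K_def by simp
    moreover have "f_lab m (map Not z1) + f_lab m (map Not z2) \<le> strength m (f_lab m)"
      using strength_ge Q_adj_comp[OF adj] by blast
    ultimately show ?thesis by linarith
  next
    case False
    then have e2: "even (weight z2)" using w by auto
    have "f_lab n y + f_lab n x \<le> f_lab m (map Not z2) + f_lab m (map Not z1) + K"
      using mainL[OF mev l2 l1 e2] w unfolding x y n K_def by auto
    moreover have "f_lab m (map Not z2) + f_lab m (map Not z1) \<le> strength m (f_lab m)"
      using strength_ge Q_adj_comp[OF Q_adj_sym[OF adj]] by blast
    ultimately show ?thesis by linarith
  qed
  obtain q where q: "m = 2 * q" using mev by blast
  have q1: "q \<ge> 1" using mev q by simp
  have c1: "nat \<lceil>real (n - 3) / 2\<rceil> = m div 2"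
  proof -
    have "real (n - 3) / 2 = real q - 1 / 2" using n q q1 by (simp add: of_nat_diff field_simps)
    then have "\<lceil>real (n - 3) / 2\<rceil> = int q" by (intro ceiling_unique) auto
    then show ?thesis using q by simp
  qed
  have c2: "nat \<lceil>real (n - 2) / 2\<rceil> = m div 2"
  proof -
    have "real (n - 2) / 2 = real q" using n q by simp
    then show ?thesis using q by simp
  qed
  have "n - 3 = m - 1" using n by simp
  then show ?thesis using main assms(4) c1 c2 unfolding K_def m_def by simp
qed

end
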